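(* Let $\pi_n$ be a posterior density on $\Theta$, $f^*_{\hat\theta}$ a probability density symmetric about $\hat\theta\in\Theta$, $q^*_{\hat\theta}=2f^*_{\hat\theta}w^*_{\hat\theta}$, and let $q_{\hat\theta}(\theta)=2f^*_{\hat\theta}(\theta)w_{\hat\theta}(\theta)$ where $w_{\hat\theta}:\Theta\to[0,1]$ is any (measurable) function with $w_{\hat\theta}(\theta)=1-w_{\hat\theta}(2\hat\theta-\theta)$ for all $\theta$. Then for every such $w_{\hat\theta}$, every $\hat\theta\in\Theta$ and every sample size $n$, $$\mathcal{D}[\pi_n\,\|\,q^*_{\hat\theta}]\le\mathcal{D}[\pi_n\,\|\,q_{\hat\theta}],$$ where $\mathcal{D}$ is $\mathcal{D}_{TV}$ or any $\alpha$-divergence $\mathcal{D}_\alpha$, $\alpha\in\mathbb{R}\setminus\{0,1\}$ (including the limiting Kullback–Leibler cases $\alpha\to0,1$).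
   Context: Posterior $\pi_n(\theta)=\pi(\theta)L(\theta;y_{1:n})/c(y_{1:n})$ on $\Theta\subseteq\mathbb{R}^d$, $\Theta$ symmetric about $\hat\theta$. Symmetric about $\hat\theta$ means $f(\theta)=f(2\hat\theta-\theta)$. Skewness-inducing factor: $w^*_{\hat\theta}(\theta)=\frac{\pi(\theta)L(\theta;y_{1:n})}{\pi(\theta)L(\theta;y_{1:n})+\pi(2\hat\theta-\theta)L(2\hat\theta-\theta;y_{1:n})}$, set to $1/2$ when numerator and denominator both vanish. $\mathcal{D}_{TV}[p\|q]=\tfrac12\int|p-q|$; $\mathcal{D}_\alpha[p\|q]=\frac{1}{\alpha(1-\alpha)}(1-\int p^\alpha q^{1-\alpha})$; limits $\alpha\to1$: $\mathrm{KL}[p\|q]$, $\alpha\to0$: $\mathrm{KL}[q\|p]$. *)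

theory Defs
  imports "HOL-Analysis.Analysis"
begin

definition refl_pt :: "'a::real_vector \<Rightarrow> 'a \<Rightarrow> 'a" where
  "refl_pt th t = 2 *\<^sub>R th - t"

definition sym_about :: "'a::real_vector \<Rightarrow> 'a set \<Rightarrow> bool" where
  "sym_about th S \<longleftrightarrow> (\<forall>t\<in>S. refl_pt th t \<in> S)"

definition post_norm :: "('a::euclidean_space \<Rightarrow> real) \<Rightarrow> ('a \<Rightarrow> real) \<Rightarrow> 'a set \<Rightarrow> real" where
  "post_norm prior lik S = enn2real (\<integral>\<^sup>+ t. ennreal (prior t * lik t) * indicator S t \<partial>lborel)"

definition posterior :: "('a::euclidean_space \<Rightarrow> real) \<Rightarrow> ('a \<Rightarrow> real) \<Rightarrow> 'a set \<Rightarrow> 'a \<Rightarrow> real" where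
  "posterior prior lik S t = prior t * lik t / post_norm prior lik S"

text \<open>Skewness-inducing factor w*, set to 1/2 when numerator and denominator both vanish.\<close>
definition skew_factor :: "('a::real_vector \<Rightarrow> real) \<Rightarrow> ('a \<Rightarrow> real) \<Rightarrow> 'a \<Rightarrow> 'a \<Rightarrow> real" where
  "skew_factor prior lik th t =
     (let a = prior t * lik t; b = prior (refl_pt th t) * lik (refl_pt th t)
      in if a = 0 \<and> a + b = 0 then 1/2 else a / (a + b))"

definition skew_density :: "('a \<Rightarrow> real) \<Rightarrow> ('a \<Rightarrow> real) \<Rightarrow> 'a \<Rightarrow> real" where
  "skew_density f w t = 2 * f t * w t"

definition TV_div :: "'a::euclidean_space set \<Rightarrow> ('a \<Rightarrow> real) \<Rightarrow> ('a \<Rightarrow> real) \<Rightarrow> ennreal" where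
  "TV_div S p q = ennreal (1/2) * (\<integral>\<^sup>+ t. ennreal \<bar>p t - q t\<bar> * indicator S t \<partial>lborel)"

definition pow_e :: "real \<Rightarrow> real \<Rightarrow> ennreal" where
  "pow_e x a = (if x > 0 then ennreal (x powr a) else if a > 0 then 0 else if a = 0 then 1 else \<infinity>)"

definition alpha_div :: "real \<Rightarrow> 'a::euclidean_space set \<Rightarrow> ('a \<Rightarrow> real) \<Rightarrow> ('a \<Rightarrow> real) \<Rightarrow> ereal" where
  "alpha_div \<alpha> S p q = ereal (1 / (\<alpha> * (1 - \<alpha>))) *
     (1 - enn2ereal (\<integral>\<^sup>+ t. pow_e (p t) \<alpha> * pow_e (q t) (1 - \<alpha>) * indicator S t \<partial>lborel))"

text \<open>Kullback-Leibler divergence int p log(p/q), as positive part minus negative part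
  of the integrand (0 log(0/q) = 0, p log(p/0) = infinity for p > 0).\<close>
definition kl_pos :: "real \<Rightarrow> real \<Rightarrow> ennreal" where
  "kl_pos x y = (if x \<le> 0 then 0 else if y \<le> 0 then \<infinity> else ennreal (x * ln (x / y)))"

definition kl_neg :: "real \<Rightarrow> real \<Rightarrow> ennreal" where
  "kl_neg x y = (if x \<le> 0 \<or> y \<le> 0 then 0 else ennreal (- (x * ln (x / y))))"

definition KL_div :: "'a::euclidean_space set \<Rightarrow> ('a \<Rightarrow> real) \<Rightarrow> ('a \<Rightarrow> real) \<Rightarrow> ereal" where
  "KL_div S p q = enn2ereal (\<integral>\<^sup>+ t. kl_pos (p t) (q t) * indicator S t \<partial>lborel)
                 - enn2ereal (\<integral>\<^sup>+ t. kl_neg (p t) (q t) * indicator S t \<partial>lborel)"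

end

theory Submission
  imports Defs
begin

lemma refl_refl[simp]: "refl_pt th (refl_pt th t) = t"
  by (simp add: refl_pt_def)

lemma refl_meas[measurable]: "refl_pt (th::'a::euclidean_space) \<in> borel_measurable borel"
  unfolding refl_pt_def[abs_def] by simp

lemma nn_integral_refl:
  fixes H :: "'a::euclidean_space \<Rightarrow> ennreal"
  assumes [measurable]: "H \<in> borel_measurable borel"
  shows "(\<integral>\<^sup>+t. H (refl_pt th t) \<partial>lborel) = (\<integral>\<^sup>+t. H t \<partial>lborel)"
proof -
  have "lborel = density (distr lborel borel (\<lambda>x. 2 *\<^sub>R th + (-1) *\<^sub>R x)) (\<lambda>_. \<bar>-1::real\<bar>^DIM('a))"
    by (rule lborel_affine) simp
  then have L: "lborel = distr lborel borel (refl_pt th)"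
    by (simp add: refl_pt_def[abs_def] density_1)
  have "(\<integral>\<^sup>+t. H t \<partial>lborel) = (\<integral>\<^sup>+t. H t \<partial>distr lborel borel (refl_pt th))"
    using L by simp
  also have "\<dots> = (\<integral>\<^sup>+t. H (refl_pt th t) \<partial>lborel)"
    by (subst nn_integral_distr) auto
  finally show ?thesis by simp
qed

lemma nn_integral_pair:
  fixes H :: "'a::euclidean_space \<Rightarrow> ennreal"
  assumes [measurable]: "H \<in> borel_measurable borel"
  shows "(\<integral>\<^sup>+t. H t \<partial>lborel) + (\<integral>\<^sup>+t. H t \<partial>lborel) = (\<integral>\<^sup>+t. H t + H (refl_pt th t) \<partial>lborel)"
  by (subst nn_integral_add) (auto simp: nn_integral_refl)

lemma ennreal_double_le: "(x::ennreal) + x \<le> y + y \<Longrightarrow> x \<le> y"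
proof -
  assume "x + x \<le> y + y"
  then have "2 * x \<le> 2 * y" by (simp add: mult_2)
  then show "x \<le> y"
    by (subst (asm) ennreal_mult_le_mult_iff) auto
qed

lemma nn_integral_pair_le:
  fixes H1 H2 :: "'a::euclidean_space \<Rightarrow> ennreal"
  assumes [measurable]: "H1 \<in> borel_measurable borel" "H2 \<in> borel_measurable borel"
    and le: "\<And>t. H1 t + H1 (refl_pt th t) \<le> H2 t + H2 (refl_pt th t)"
  shows "(\<integral>\<^sup>+t. H1 t \<partial>lborel) \<le> (\<integral>\<^sup>+t. H2 t \<partial>lborel)"
  apply (rule ennreal_double_le)
  apply (simp only: nn_integral_pair[of _ th] assms)
  by (intro nn_integral_mono le)

lemma persp: fixes x y b :: real assumes "0 < x" "0 < y"
  shows "x powr b * y powr (1 - b) = y * (x / y) powr b"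
proof -
  have "y * (x / y) powr b = y powr 1 * (x powr b / y powr b)"
    using assms by (simp add: powr_divide)
  also have "\<dots> = x powr b * (y powr 1 / y powr b)" by simp
  also have "y powr 1 / y powr b = y powr (1 - b)" by (simp add: powr_diff)
  finally show ?thesis by simp
qed

lemma bern_powr: fixes z b :: real assumes "0 < z" "1 < b"
  shows "1 + b * (z - 1) \<le> z powr b"
proof -
  have "(z powr b) powr (1/b) * 1 powr (1 - 1/b) \<le> (1/b) * z powr b + (1 - 1/b) * 1"
    using assms by (intro Youngs_inequality_0) auto
  moreover have "(z powr b) powr (1/b) = z" using assms by (simp add: powr_powr)
  ultimately have "z \<le> (1/b) * z powr b + (1 - 1/b)" by simp
  then have "b * z \<le> b * ((1/b) * z powr b + (1 - 1/b))" using assms by simp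
  also have "\<dots> = z powr b + b - 1" using assms by (simp add: algebra_simps)
  finally show ?thesis by (simp add: algebra_simps)
qed

lemma rev_young: fixes s t b :: real assumes "0 < s" "0 < t" "1 < b"
  shows "b * s + (1 - b) * t \<le> s powr b * t powr (1 - b)"
proof -
  have "1 + b * (s/t - 1) \<le> (s/t) powr b" using assms by (intro bern_powr) auto
  then have "t * (1 + b * (s/t - 1)) \<le> t * (s/t) powr b" using assms by simp
  moreover have "t * (1 + b * (s/t - 1)) = b * s + (1 - b) * t" using assms by (simp add: field_simps)
  ultimately show ?thesis using persp[OF assms(1,2)] by simp
qed

lemma logsum: fixes x1 x2 y1 y2 :: real assumes "0 < x1" "0 < x2" "0 < y1" "0 < y2"
  shows "(x1+x2) * ln ((x1+x2)/(y1+y2)) \<le> x1 * ln (x1/y1) + x2 * ln (x2/y2)"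
proof -
  define X Y where "X = x1 + x2" and "Y = y1 + y2"
  have XY: "0 < X" "0 < Y" using assms by (auto simp: X_def Y_def)
  have k: "xi * ln (X/Y) - xi * ln (xi/yi) \<le> yi * X / Y - xi" if "0 < xi" "0 < yi" for xi yi
  proof -
    have "ln (yi * X / (xi * Y)) \<le> yi * X / (xi * Y) - 1" using that XY by (intro ln_le_minus_one) auto
    moreover have "ln (yi * X / (xi * Y)) = ln (X/Y) - ln (xi/yi)"
      using that XY by (simp add: ln_div ln_mult)
    ultimately have "xi * (ln (X/Y) - ln (xi/yi)) \<le> xi * (yi * X / (xi * Y) - 1)"
      using that by (intro mult_left_mono) auto
    moreover have "xi * (yi * X / (xi * Y) - 1) = yi * X / Y - xi" using that XY by (simp add: field_simps)
    ultimately show ?thesis by (simp add: right_diff_distrib)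
  qed
  have "x1 * ln (X/Y) - x1 * ln (x1/y1) + (x2 * ln (X/Y) - x2 * ln (x2/y2)) \<le> y1 * X / Y - x1 + (y2 * X / Y - x2)"
    using k[OF assms(1,3)] k[OF assms(2,4)] by simp
  also have "\<dots> = 0" using XY by (simp add: X_def Y_def field_simps)
  finally have "X * ln (X/Y) \<le> x1 * ln (x1/y1) + x2 * ln (x2/y2)" by (simp add: X_def distrib_right)
  then show ?thesis by (simp add: X_def Y_def)
qed

lemma powr_sub_pos: fixes x1 x2 y1 y2 b :: real assumes "0 < x1" "0 < x2" "0 < y1" "0 < y2" "1 < b"
  shows "(x1+x2) powr b * (y1+y2) powr (1-b) \<le> x1 powr b * y1 powr (1-b) + x2 powr b * y2 powr (1-b)"
proof -
  define X Y where "X = x1 + x2" and "Y = y1 + y2"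
  have XY: "0 < X" "0 < Y" using assms by (auto simp: X_def Y_def)
  define K where "K = X powr b * Y powr (1-b)"
  have K: "0 < K" using XY by (simp add: K_def)
  have k: "K * (b * (xi/X) + (1-b) * (yi/Y)) \<le> xi powr b * yi powr (1-b)" if "0 < xi" "0 < yi" for xi yi
  proof -
    have "b * (xi/X) + (1-b) * (yi/Y) \<le> (xi/X) powr b * (yi/Y) powr (1-b)"
      using that XY assms by (intro rev_young) auto
    also have "\<dots> = xi powr b * yi powr (1-b) / K" using that XY by (simp add: powr_divide K_def)
    finally show ?thesis using K by (simp add: field_simps)
  qed
  have "b * (x1/X) + (1-b) * (y1/Y) + (b * (x2/X) + (1-b) * (y2/Y)) = b * ((x1+x2)/X) + (1-b) * ((y1+y2)/Y)"
    by (simp add: add_divide_distrib algebra_simps)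
  also have "\<dots> = 1" using XY by (simp add: X_def[symmetric] Y_def[symmetric])
  finally have "K * (b * (x1/X) + (1-b) * (y1/Y)) + K * (b * (x2/X) + (1-b) * (y2/Y)) = K"
    by (metis distrib_left mult.right_neutral)
  then show ?thesis using k[OF assms(1,3)] k[OF assms(2,4)] by (simp add: K_def X_def Y_def)
qed

lemma powr_sup_pos: fixes x1 x2 y1 y2 b :: real assumes "0 < x1" "0 < x2" "0 < y1" "0 < y2" "0 < b" "b < 1"
  shows "x1 powr b * y1 powr (1-b) + x2 powr b * y2 powr (1-b) \<le> (x1+x2) powr b * (y1+y2) powr (1-b)"
proof -
  define X Y where "X = x1 + x2" and "Y = y1 + y2"
  have XY: "0 < X" "0 < Y" using assms by (auto simp: X_def Y_def)
  define K where "K = X powr b * Y powr (1-b)"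
  have K: "0 < K" using XY by (simp add: K_def)
  have k: "xi powr b * yi powr (1-b) \<le> K * (b * (xi/X) + (1-b) * (yi/Y))" if "0 < xi" "0 < yi" for xi yi
  proof -
    have "(xi/X) powr b * (yi/Y) powr (1-b) \<le> b * (xi/X) + (1-b) * (yi/Y)"
      using that XY assms by (intro Youngs_inequality_0) auto
    moreover have "(xi/X) powr b * (yi/Y) powr (1-b) = xi powr b * yi powr (1-b) / K" using that XY by (simp add: powr_divide K_def)
    ultimately show ?thesis using K by (simp add: field_simps)
  qed
  have "b * (x1/X) + (1-b) * (y1/Y) + (b * (x2/X) + (1-b) * (y2/Y)) = b * ((x1+x2)/X) + (1-b) * ((y1+y2)/Y)"
    by (simp add: add_divide_distrib algebra_simps)
  also have "\<dots> = 1" using XY by (simp add: X_def[symmetric] Y_def[symmetric])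
  finally have "K * (b * (x1/X) + (1-b) * (y1/Y)) + K * (b * (x2/X) + (1-b) * (y2/Y)) = K"
    by (metis distrib_left mult.right_neutral)
  then show ?thesis using k[OF assms(1,3)] k[OF assms(2,4)] by (simp add: K_def X_def Y_def)
qed

definition sk :: "real \<Rightarrow> real \<Rightarrow> real" where
  "sk a b = (if a = 0 \<and> a + b = 0 then 1/2 else a / (a + b))"

lemma sk_pos: "0 \<le> a \<Longrightarrow> 0 \<le> b \<Longrightarrow> 0 < a + b \<Longrightarrow> sk a b = a / (a+b)"
  by (auto simp: sk_def)
lemma sk_zero: "sk 0 0 = 1/2" by (simp add: sk_def)
lemma sk_a0: "0 < b \<Longrightarrow> sk 0 b = 0" by (simp add: sk_def)
lemma sk_b0: "0 < a \<Longrightarrow> sk a 0 = 1" by (simp add: sk_def)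
lemma sk_one_minus: fixes a b :: real shows "0 < a + b \<Longrightarrow> 1 - a / (a+b) = b / (a+b)"
proof -
  assume "0 < a + b" then have "a + b \<noteq> 0" by simp
  then show ?thesis by (simp add: field_simps)
qed

definition phi :: "real \<Rightarrow> real \<Rightarrow> ennreal" where
  "phi x y = (if 0 < x then (if 0 < y then ennreal (x * ln (x/y) - x + y) else \<infinity>) else ennreal y)"

lemma phi_nn: fixes x y :: real assumes "0 < x" "0 < y" shows "0 \<le> x * ln (x/y) - x + y"
proof -
  have "ln (y/x) \<le> y/x - 1" using assms by (intro ln_le_minus_one) auto
  then have "x * ln (y/x) \<le> x * (y/x - 1)" using assms by (intro mult_left_mono) auto
  moreover have "x * (y/x - 1) = y - x" using assms by (simp add: field_simps)
  moreover have "ln (y/x) = - ln (x/y)" using assms by (simp add: ln_div)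
  ultimately show ?thesis by simp
qed

lemma phi_sub:
  fixes x1 x2 y1 y2 :: real
  assumes "0 \<le> x1" "0 \<le> x2" "0 \<le> y1" "0 \<le> y2"
  shows "phi (x1+x2) (y1+y2) \<le> phi x1 y1 + phi x2 y2"
proof -
  consider "(0 < x1 \<and> y1 = 0) \<or> (0 < x2 \<and> y2 = 0)" | "x1 = 0" "x2 = 0"
    | "x1 = 0" "0 < x2" "0 < y2" | "x2 = 0" "0 < x1" "0 < y1" | "0 < x1" "0 < x2" "0 < y1" "0 < y2"
    using assms by fastforce
  then show ?thesis
  proof cases
    case 1 then show ?thesis by (auto simp: phi_def)
  next
    case 2 then show ?thesis using assms by (simp add: phi_def)
  next
    case 3
    have "ln (x2/(y1+y2)) \<le> ln (x2/y2)" using 3 assms by (simp add: frac_le)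
    then have "x2 * ln (x2/(y1+y2)) \<le> x2 * ln (x2/y2)" using 3 by simp
    then have "ennreal (x2 * ln (x2/(y1+y2)) - x2 + (y1+y2)) \<le> ennreal (y1 + (x2 * ln (x2/y2) - x2 + y2))"
      by (intro ennreal_leI) simp
    then show ?thesis using 3 assms phi_nn[of x2 y2] by (simp add: phi_def add_pos_nonneg)
  next
    case 4
    have "ln (x1/(y1+y2)) \<le> ln (x1/y1)" using 4 assms by (simp add: frac_le)
    then have "x1 * ln (x1/(y1+y2)) \<le> x1 * ln (x1/y1)" using 4 by simp
    then have "ennreal (x1 * ln (x1/(y1+y2)) - x1 + (y1+y2)) \<le> ennreal ((x1 * ln (x1/y1) - x1 + y1) + y2)"
      by (intro ennreal_leI) simp
    then show ?thesis using 4 assms phi_nn[of x1 y1] by (simp add: phi_def add_pos_nonneg)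
  next
    case 5
    have "ennreal ((x1+x2) * ln ((x1+x2)/(y1+y2)) - (x1+x2) + (y1+y2)) \<le>
          ennreal ((x1 * ln (x1/y1) - x1 + y1) + (x2 * ln (x2/y2) - x2 + y2))"
      using logsum[OF 5] by (intro ennreal_leI) simp
    then show ?thesis using 5 phi_nn[of x1 y1] phi_nn[of x2 y2] by (simp add: phi_def)
  qed
qed

lemma phi_homA:
  fixes a b c :: real
  assumes "0 \<le> a" "0 \<le> b" "0 \<le> c"
  shows "phi a (c * sk a b) + phi b (c * (1 - sk a b)) = phi (a+b) c"
proof -
  consider "a = 0" "b = 0" | "a = 0" "0 < b" | "0 < a" "b = 0" | "0 < a" "0 < b" "c = 0" | "0 < a" "0 < b" "0 < c"
    using assms by fastforce
  then show ?thesis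
  proof cases
    case 1 then show ?thesis using assms by (simp add: sk_zero phi_def ennreal_plus[symmetric])
  next
    case 2 then show ?thesis by (simp add: sk_a0 phi_def)
  next
    case 3 then show ?thesis by (simp add: sk_b0 phi_def)
  next
    case 4 then show ?thesis by (simp add: phi_def)
  next
    case 5
    define S where "S = a + b"
    have S: "0 < S" using 5 by (simp add: S_def)
    have sk: "sk a b = a / S" "1 - sk a b = b / S" using 5 by (simp_all add: sk_pos S_def sk_one_minus)
    have e1: "a / (c * (a/S)) = S / c" "b / (c * (b/S)) = S / c" using 5 S by (simp_all add: field_simps)
    have "a * ln (S/c) - a + c * (a/S) + (b * ln (S/c) - b + c * (b/S)) = (a+b) * ln (S/c) - (a+b) + c * ((a+b)/S)"
      by (simp add: algebra_simps add_divide_distrib)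
    then have "a * ln (S/c) - a + c * (a/S) + (b * ln (S/c) - b + c * (b/S)) = S * ln (S/c) - S + c"
      using S by (simp add: S_def[symmetric])
    moreover have "0 \<le> a * ln (S/c) - a + c * (a/S)" using phi_nn[of a "c * (a/S)"] e1 5 S by simp
    moreover have "0 \<le> b * ln (S/c) - b + c * (b/S)" using phi_nn[of b "c * (b/S)"] e1 5 S by simp
    ultimately show ?thesis using 5 S unfolding sk(2) unfolding sk(1)
      by (simp add: phi_def e1 S_def[symmetric] ennreal_plus[symmetric] del: ennreal_plus)
  qed
qed

lemma phi_homB:
  fixes a b c :: real
  assumes "0 \<le> a" "0 \<le> b" "0 \<le> c"
  shows "phi (c * sk a b) a + phi (c * (1 - sk a b)) b = phi c (a+b)"
proof -
  consider "a = 0" "b = 0" | "a = 0" "0 < b" | "0 < a" "b = 0" | "0 < a" "0 < b" "c = 0" | "0 < a" "0 < b" "0 < c"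
    using assms by fastforce
  then show ?thesis
  proof cases
    case 1 then show ?thesis using assms by (simp add: sk_zero phi_def)
  next
    case 2 then show ?thesis by (simp add: sk_a0 phi_def)
  next
    case 3 then show ?thesis by (simp add: sk_b0 phi_def)
  next
    case 4 then show ?thesis by (simp add: phi_def)
  next
    case 5
    define S where "S = a + b"
    have S: "0 < S" using 5 by (simp add: S_def)
    have sk: "sk a b = a / S" "1 - sk a b = b / S" using 5 by (simp_all add: sk_pos S_def sk_one_minus)
    have e1: "c * (a/S) / a = c / S" "c * (b/S) / b = c / S" using 5 S by (simp_all add: field_simps)
    have "c * (a/S) * ln (c/S) - c * (a/S) + a + (c * (b/S) * ln (c/S) - c * (b/S) + b) = c * ((a+b)/S) * ln (c/S) - c * ((a+b)/S) + (a+b)"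
      by (simp add: algebra_simps add_divide_distrib)
    then have "c * (a/S) * ln (c/S) - c * (a/S) + a + (c * (b/S) * ln (c/S) - c * (b/S) + b) = c * ln (c/S) - c + S"
      using S by (simp add: S_def[symmetric])
    moreover have "0 \<le> c * (a/S) * ln (c/S) - c * (a/S) + a" using phi_nn[of "c * (a/S)" a] e1 5 S by simp
    moreover have "0 \<le> c * (b/S) * ln (c/S) - c * (b/S) + b" using phi_nn[of "c * (b/S)" b] e1 5 S by simp
    ultimately show ?thesis using 5 S unfolding sk(2) unfolding sk(1)
      by (simp add: phi_def e1 S_def[symmetric] ennreal_plus[symmetric] del: ennreal_plus)
  qed
qed

definition Hb :: "real \<Rightarrow> real \<Rightarrow> real \<Rightarrow> ennreal" where
  "Hb \<beta> x y = (if 0 < y then ennreal (x powr \<beta> * y powr (1-\<beta>)) else if 0 < x then \<infinity> else 0)"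

lemma Hb_sub:
  fixes x1 x2 y1 y2 b :: real
  assumes "0 \<le> x1" "0 \<le> x2" "0 \<le> y1" "0 \<le> y2" "1 < b"
  shows "Hb b (x1+x2) (y1+y2) \<le> Hb b x1 y1 + Hb b x2 y2"
proof -
  consider "(0 < x1 \<and> y1 = 0) \<or> (0 < x2 \<and> y2 = 0)" | "y1 = 0" "x1 = 0" | "y2 = 0" "x2 = 0"
    | "0 < y1" "0 < y2" "x1 = 0" | "0 < y1" "0 < y2" "x2 = 0" | "0 < x1" "0 < x2" "0 < y1" "0 < y2"
    using assms by fastforce
  then show ?thesis
  proof cases
    case 1 then show ?thesis by (auto simp: Hb_def)
  next
    case 2 then show ?thesis by (simp add: Hb_def)
  next
    case 3 then show ?thesis by (simp add: Hb_def)
  next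
    case 4
    have "(y1+y2) powr (1-b) \<le> y2 powr (1-b)" using 4 assms by (intro powr_mono2') auto
    then have "x2 powr b * (y1+y2) powr (1-b) \<le> x2 powr b * y2 powr (1-b)" by (intro mult_left_mono) auto
    then show ?thesis using 4 by (simp add: Hb_def)
  next
    case 5
    have "(y1+y2) powr (1-b) \<le> y1 powr (1-b)" using 5 assms by (intro powr_mono2') auto
    then have "x1 powr b * (y1+y2) powr (1-b) \<le> x1 powr b * y1 powr (1-b)" by (intro mult_left_mono) auto
    then show ?thesis using 5 by (simp add: Hb_def)
  next
    case 6
    show ?thesis using 6 powr_sub_pos[OF 6 assms(5)]
      by (simp add: Hb_def ennreal_plus[symmetric] del: ennreal_plus)
  qed
qed

lemma Hb_homA:
  fixes a b c \<beta> :: real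
  assumes "0 \<le> a" "0 \<le> b" "0 \<le> c"
  shows "Hb \<beta> a (c * sk a b) + Hb \<beta> b (c * (1 - sk a b)) = Hb \<beta> (a+b) c"
proof -
  consider "a = 0" "b = 0" | "a = 0" "0 < b" | "0 < a" "b = 0" | "0 < a" "0 < b" "c = 0" | "0 < a" "0 < b" "0 < c"
    using assms by fastforce
  then show ?thesis
  proof cases
    case 1 then show ?thesis using assms by (simp add: sk_zero Hb_def)
  next
    case 2 then show ?thesis by (simp add: sk_a0 Hb_def)
  next
    case 3 then show ?thesis by (simp add: sk_b0 Hb_def)
  next
    case 4 then show ?thesis by (simp add: Hb_def)
  next
    case 5
    define S where "S = a + b"
    have S: "0 < S" using 5 by (simp add: S_def)
    have sk: "sk a b = a / S" "1 - sk a b = b / S" using 5 by (simp_all add: sk_pos S_def sk_one_minus)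
    have e1: "a / (c * (a/S)) = S / c" "b / (c * (b/S)) = S / c" using 5 S by (simp_all add: field_simps)
    have p1: "a powr \<beta> * (c * (a/S)) powr (1-\<beta>) = c * (a/S) * (S/c) powr \<beta>"
      using persp[of a "c * (a/S)" \<beta>] e1 5 S by simp
    have p2: "b powr \<beta> * (c * (b/S)) powr (1-\<beta>) = c * (b/S) * (S/c) powr \<beta>"
      using persp[of b "c * (b/S)" \<beta>] e1 5 S by simp
    have p3: "S powr \<beta> * c powr (1-\<beta>) = c * (S/c) powr \<beta>" using persp[of S c \<beta>] 5 S by simp
    have "c * (a/S) * (S/c) powr \<beta> + c * (b/S) * (S/c) powr \<beta> = c * ((a+b)/S) * (S/c) powr \<beta>"
      by (simp add: algebra_simps add_divide_distrib)
    then have sum: "c * (a/S) * (S/c) powr \<beta> + c * (b/S) * (S/c) powr \<beta> = c * (S/c) powr \<beta>"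
      using S by (simp add: S_def[symmetric])
    have pos: "0 < c * (a/S)" "0 < c * (b/S)" using 5 S by auto
    have nn: "0 \<le> c * (a/S) * (S/c) powr \<beta>" "0 \<le> c * (b/S) * (S/c) powr \<beta>" using pos by (auto intro!: mult_nonneg_nonneg simp del: times_divide_eq_right)
    have "Hb \<beta> a (c * (a/S)) + Hb \<beta> b (c * (b/S)) = ennreal (c * (a/S) * (S/c) powr \<beta>) + ennreal (c * (b/S) * (S/c) powr \<beta>)"
      unfolding Hb_def by (simp only: pos if_True p1 p2)
    also have "\<dots> = ennreal (c * (S/c) powr \<beta>)" using nn by (simp only: ennreal_plus[symmetric] sum)
    also have "\<dots> = Hb \<beta> (a+b) c" using 5 by (simp only: Hb_def S_def[symmetric] p3 if_True)
    finally show ?thesis unfolding sk(2) unfolding sk(1) .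
  qed
qed

lemma Hb_homB:
  fixes a b c \<beta> :: real
  assumes "0 \<le> a" "0 \<le> b" "0 \<le> c"
  shows "Hb \<beta> (c * sk a b) a + Hb \<beta> (c * (1 - sk a b)) b = Hb \<beta> c (a+b)"
proof -
  consider "a = 0" "b = 0" | "a = 0" "0 < b" | "0 < a" "b = 0" | "0 < a" "0 < b" "c = 0" | "0 < a" "0 < b" "0 < c"
    using assms by fastforce
  then show ?thesis
  proof cases
    case 1 then show ?thesis using assms by (simp add: sk_zero Hb_def)
  next
    case 2 then show ?thesis by (simp add: sk_a0 Hb_def)
  next
    case 3 then show ?thesis by (simp add: sk_b0 Hb_def)
  next
    case 4 then show ?thesis by (simp add: Hb_def)
  next
    case 5
    define S where "S = a + b"
    have S: "0 < S" using 5 by (simp add: S_def)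
    have sk: "sk a b = a / S" "1 - sk a b = b / S" using 5 by (simp_all add: sk_pos S_def sk_one_minus)
    have e1: "c * (a/S) / a = c / S" "c * (b/S) / b = c / S" using 5 S by (simp_all add: field_simps)
    have p1: "(c * (a/S)) powr \<beta> * a powr (1-\<beta>) = a * (c/S) powr \<beta>"
      using persp[of "c * (a/S)" a \<beta>] e1 5 S by simp
    have p2: "(c * (b/S)) powr \<beta> * b powr (1-\<beta>) = b * (c/S) powr \<beta>"
      using persp[of "c * (b/S)" b \<beta>] e1 5 S by simp
    have p3: "c powr \<beta> * S powr (1-\<beta>) = S * (c/S) powr \<beta>" using persp[of c S \<beta>] 5 S by simp
    have sum: "a * (c/S) powr \<beta> + b * (c/S) powr \<beta> = S * (c/S) powr \<beta>"
      by (simp add: S_def algebra_simps)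
    have nn: "0 \<le> a * (c/S) powr \<beta>" "0 \<le> b * (c/S) powr \<beta>" using 5 by auto
    have "Hb \<beta> (c * (a/S)) a + Hb \<beta> (c * (b/S)) b = ennreal (a * (c/S) powr \<beta>) + ennreal (b * (c/S) powr \<beta>)"
      unfolding Hb_def using 5 by (simp only: if_True p1 p2)
    also have "\<dots> = ennreal (S * (c/S) powr \<beta>)" using nn by (simp only: ennreal_plus[symmetric] sum)
    also have "\<dots> = Hb \<beta> c (a+b)" using S by (simp only: Hb_def S_def[symmetric] p3 if_True)
    finally show ?thesis unfolding sk(2) unfolding sk(1) .
  qed
qed

lemma Gr_sup:
  fixes x1 x2 y1 y2 b :: real
  assumes "0 \<le> x1" "0 \<le> x2" "0 \<le> y1" "0 \<le> y2" "0 < b" "b < 1"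
  shows "x1 powr b * y1 powr (1-b) + x2 powr b * y2 powr (1-b) \<le> (x1+x2) powr b * (y1+y2) powr (1-b)"
proof -
  have m: "xi powr b * yi powr (1-b) \<le> (x1+x2) powr b * (y1+y2) powr (1-b)"
    if "0 \<le> xi" "0 \<le> yi" "xi \<le> x1+x2" "yi \<le> y1+y2" for xi yi
    using that assms by (intro mult_mono powr_mono2) auto
  consider "x1 = 0 \<or> y1 = 0" | "x2 = 0 \<or> y2 = 0" | "0 < x1" "0 < x2" "0 < y1" "0 < y2"
    using assms by fastforce
  then show ?thesis
  proof cases
    case 1
    then have "x1 powr b * y1 powr (1-b) = 0" using assms by auto
    moreover have "x2 powr b * y2 powr (1-b) \<le> (x1+x2) powr b * (y1+y2) powr (1-b)" using m[of x2 y2] assms by simp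
    ultimately show ?thesis by linarith
  next
    case 2
    then have "x2 powr b * y2 powr (1-b) = 0" using assms by auto
    moreover have "x1 powr b * y1 powr (1-b) \<le> (x1+x2) powr b * (y1+y2) powr (1-b)" using m[of x1 y1] assms by simp
    ultimately show ?thesis by linarith
  next
    case 3 then show ?thesis using powr_sup_pos[OF 3 assms(5,6)] by simp
  qed
qed

lemma Gr_homA:
  fixes a b c \<beta> :: real
  assumes "0 \<le> a" "0 \<le> b" "0 \<le> c" "0 < \<beta>" "\<beta> < 1"
  shows "a powr \<beta> * (c * sk a b) powr (1-\<beta>) + b powr \<beta> * (c * (1 - sk a b)) powr (1-\<beta>) = (a+b) powr \<beta> * c powr (1-\<beta>)"
proof -
  consider "a = 0" "b = 0" | "a = 0" "0 < b" | "0 < a" "b = 0" | "0 < a" "0 < b" "c = 0" | "0 < a" "0 < b" "0 < c"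
    using assms by fastforce
  then show ?thesis
  proof cases
    case 1 then show ?thesis using assms by (simp add: sk_zero)
  next
    case 2 then show ?thesis by (simp add: sk_a0)
  next
    case 3 then show ?thesis by (simp add: sk_b0)
  next
    case 4 then show ?thesis using assms by simp
  next
    case 5
    define S where "S = a + b"
    have S: "0 < S" using 5 by (simp add: S_def)
    have sk: "sk a b = a / S" "1 - sk a b = b / S" using 5 by (simp_all add: sk_pos S_def sk_one_minus)
    have e1: "a / (c * (a/S)) = S / c" "b / (c * (b/S)) = S / c" using 5 S by (simp_all add: field_simps)
    have p1: "a powr \<beta> * (c * (a/S)) powr (1-\<beta>) = c * (a/S) * (S/c) powr \<beta>"
      using persp[of a "c * (a/S)" \<beta>] e1 5 S by simp
    have p2: "b powr \<beta> * (c * (b/S)) powr (1-\<beta>) = c * (b/S) * (S/c) powr \<beta>"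
      using persp[of b "c * (b/S)" \<beta>] e1 5 S by simp
    have p3: "S powr \<beta> * c powr (1-\<beta>) = c * (S/c) powr \<beta>" using persp[of S c \<beta>] 5 S by simp
    have "c * (a/S) * (S/c) powr \<beta> + c * (b/S) * (S/c) powr \<beta> = c * ((a+b)/S) * (S/c) powr \<beta>"
      by (simp add: algebra_simps add_divide_distrib)
    then have sum: "c * (a/S) * (S/c) powr \<beta> + c * (b/S) * (S/c) powr \<beta> = c * (S/c) powr \<beta>"
      using S by (simp add: S_def[symmetric])
    show ?thesis unfolding sk(2) unfolding sk(1) p1 p2 S_def[symmetric] p3 using sum by simp
  qed
qed

lemma TV_homA:
  fixes a b c :: real
  assumes "0 \<le> a" "0 \<le> b" "0 \<le> c"
  shows "\<bar>a - c * sk a b\<bar> + \<bar>b - c * (1 - sk a b)\<bar> = \<bar>a + b - c\<bar>"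
proof (cases "a + b = 0")
  case True then have "a = 0" "b = 0" using assms by auto
  then show ?thesis using assms by (simp add: sk_zero)
next
  case False
  define S where "S = a + b"
  have S: "0 < S" using False assms by (simp add: S_def)
  have sk: "sk a b = a / S" "1 - sk a b = b / S" using S assms by (simp_all add: sk_pos S_def sk_one_minus)
  have "a - c * (a/S) = (a/S) * (S - c)" "b - c * (b/S) = (b/S) * (S - c)" using S by (simp_all add: field_simps)
  then have "\<bar>a - c * (a/S)\<bar> + \<bar>b - c * (b/S)\<bar> = (a/S + b/S) * \<bar>S - c\<bar>"
    using S assms by (simp add: abs_mult distrib_right)
  also have "a/S + b/S = 1" using S by (simp add: S_def add_divide_distrib[symmetric])
  finally show ?thesis unfolding sk(2) unfolding sk(1) by (simp add: S_def)
qed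

lemma pe_pos: "0 < x \<Longrightarrow> pow_e x a = ennreal (x powr a)" by (simp add: pow_e_def)

lemma pe_mid: fixes x y \<alpha> :: real assumes "0 \<le> x" "0 \<le> y" "0 < \<alpha>" "\<alpha> < 1"
  shows "pow_e x \<alpha> * pow_e y (1-\<alpha>) = ennreal (x powr \<alpha> * y powr (1-\<alpha>))"
  using assms by (cases "x = 0"; cases "y = 0") (auto simp: pow_e_def ennreal_mult)

lemma pe_big: fixes x y \<alpha> :: real assumes "0 \<le> x" "0 \<le> y" "1 < \<alpha>"
  shows "pow_e x \<alpha> * pow_e y (1-\<alpha>) = Hb \<alpha> x y"
  using assms by (cases "x = 0"; cases "y = 0") (auto simp: pow_e_def Hb_def ennreal_mult)

lemma pe_neg: fixes x y \<alpha> :: real assumes "0 \<le> x" "0 \<le> y" "\<alpha> < 0"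
  shows "pow_e x \<alpha> * pow_e y (1-\<alpha>) = Hb (1-\<alpha>) y x"
  using pe_big[of y x "1-\<alpha>"] assms by (simp add: mult.commute)

lemma kl_id: fixes x y :: real assumes "0 \<le> x" "0 \<le> y"
  shows "kl_pos x y + ennreal y = kl_neg x y + ennreal x + phi x y"
proof -
  consider "x = 0" | "0 < x" "y = 0" | "0 < x" "0 < y" using assms by fastforce
  then show ?thesis
  proof cases
    case 1 then show ?thesis by (simp add: kl_pos_def kl_neg_def phi_def)
  next
    case 2 then show ?thesis by (simp add: kl_pos_def kl_neg_def phi_def)
  next
    case 3
    define L where "L = x * ln (x/y)"
    have nn: "0 \<le> L - x + y" using phi_nn[OF 3] by (simp add: L_def)
    show ?thesis
    proof (cases "0 \<le> L")
      case True
      then show ?thesis using 3 nn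
        by (simp add: kl_pos_def kl_neg_def phi_def L_def[symmetric] ennreal_plus[symmetric] ennreal_neg del: ennreal_plus)
    next
      case False
      then show ?thesis using 3 nn
        by (simp add: kl_pos_def kl_neg_def phi_def L_def[symmetric] ennreal_plus[symmetric] ennreal_neg del: ennreal_plus)
    qed
  qed
qed

lemma kl_neg_le: fixes x y :: real assumes "0 \<le> y" shows "kl_neg x y \<le> ennreal y"
proof (cases "x \<le> 0 \<or> y \<le> 0")
  case True then show ?thesis by (simp add: kl_neg_def)
next
  case False
  then have xy: "0 < x" "0 < y" by auto
  have "ln (y/x) \<le> y/x - 1" using xy by (intro ln_le_minus_one) auto
  then have "x * ln (y/x) \<le> x * (y/x - 1)" using xy by (intro mult_left_mono) auto
  moreover have "x * (y/x - 1) = y - x" using xy by (simp add: field_simps)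
  moreover have "ln (y/x) = - ln (x/y)" using xy by (simp add: ln_div)
  ultimately have "- (x * ln (x/y)) \<le> y" using xy by simp
  then show ?thesis using False by (simp add: kl_neg_def ennreal_leI)
qed

lemma sk_swap: fixes a b :: real assumes "0 \<le> a" "0 \<le> b" shows "sk b a = 1 - sk a b"
  using assms by (cases "a + b = 0") (auto simp: sk_def sk_one_minus add.commute)

lemma sk_nonneg: fixes a b :: real assumes "0 \<le> a" "0 \<le> b" shows "0 \<le> sk a b \<and> sk a b \<le> 1"
  using assms by (cases "a + b = 0") (auto simp: sk_def)

lemma sym_ind: assumes "\<forall>t\<in>S. refl_pt th t \<in> S"
  shows "indicator S (refl_pt th t) = (indicator S t :: ennreal)"
  using assms by (metis indicator_simps refl_refl)

lemma main_A:
  fixes F :: "real \<Rightarrow> real \<Rightarrow> ennreal" and p f W1 W2 :: "'a::euclidean_space \<Rightarrow> real"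
  assumes sym: "\<forall>t\<in>S. refl_pt th t \<in> S"
    and p_nn: "\<forall>t\<in>S. 0 \<le> p t" and f_nn: "\<forall>t\<in>S. 0 \<le> f t"
    and f_sym: "\<forall>t\<in>S. f t = f (refl_pt th t)"
    and W1: "\<forall>t\<in>S. W1 t = sk (p t) (p (refl_pt th t))"
    and W2: "\<forall>t\<in>S. 0 \<le> W2 t \<and> W2 t \<le> 1 \<and> W2 t = 1 - W2 (refl_pt th t)"
    and sub: "\<And>x1 x2 y1 y2. 0 \<le> x1 \<Longrightarrow> 0 \<le> x2 \<Longrightarrow> 0 \<le> y1 \<Longrightarrow> 0 \<le> y2 \<Longrightarrow>
                F (x1+x2) (y1+y2) \<le> F x1 y1 + F x2 y2"
    and hom: "\<And>a b c. 0 \<le> a \<Longrightarrow> 0 \<le> b \<Longrightarrow> 0 \<le> c \<Longrightarrow>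
                F a (c * sk a b) + F b (c * (1 - sk a b)) = F (a+b) c"
    and m1: "(\<lambda>t. F (p t) (skew_density f W1 t) * indicator S t) \<in> borel_measurable borel"
    and m2: "(\<lambda>t. F (p t) (skew_density f W2 t) * indicator S t) \<in> borel_measurable borel"
  shows "(\<integral>\<^sup>+t. F (p t) (skew_density f W1 t) * indicator S t \<partial>lborel)
           \<le> (\<integral>\<^sup>+t. F (p t) (skew_density f W2 t) * indicator S t \<partial>lborel)"
proof (rule nn_integral_pair_le[OF m1 m2])
  fix t
  show "F (p t) (skew_density f W1 t) * indicator S t + F (p (refl_pt th t)) (skew_density f W1 (refl_pt th t)) * indicator S (refl_pt th t)
     \<le> F (p t) (skew_density f W2 t) * indicator S t + F (p (refl_pt th t)) (skew_density f W2 (refl_pt th t)) * indicator S (refl_pt th t)"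
  proof (cases "t \<in> S")
    case False
    then show ?thesis using sym_ind[OF sym, of t] by simp
  next
    case True
    define a b c w where "a = p t" and "b = p (refl_pt th t)" and "c = 2 * f t" and "w = W2 t"
    have rS: "refl_pt th t \<in> S" using sym True by auto
    have abc: "0 \<le> a" "0 \<le> b" "0 \<le> c" using True rS p_nn f_nn by (auto simp: a_def b_def c_def)
    have w: "0 \<le> w" "w \<le> 1" using W2 True by (auto simp: w_def)
    have d1: "skew_density f W1 t = c * sk a b" using W1 True by (simp add: skew_density_def a_def b_def c_def)
    have fr: "f (refl_pt th t) = f t" using f_sym True by auto
    have d1r: "skew_density f W1 (refl_pt th t) = c * (1 - sk a b)"
    proof -
      have "W1 (refl_pt th t) = sk b a" using W1 rS by (simp add: a_def b_def)
      then show ?thesis using sk_swap[OF abc(1,2)] fr by (simp add: skew_density_def c_def)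
    qed
    have d2: "skew_density f W2 t = c * w" by (simp add: skew_density_def c_def w_def)
    have d2r: "skew_density f W2 (refl_pt th t) = c * (1 - w)"
    proof -
      have "W2 (refl_pt th t) = 1 - w" using W2 True by (simp add: w_def)
      then show ?thesis using fr by (simp add: skew_density_def c_def)
    qed
    have cw: "c*w + c*(1-w) = c" by (simp add: algebra_simps)
    have "F a (c * sk a b) + F b (c * (1 - sk a b)) = F (a+b) (c*w + c*(1-w))"
      using hom[OF abc] by (simp only: cw)
    also have "\<dots> \<le> F a (c*w) + F b (c*(1-w))" using abc w by (intro sub) auto
    finally show ?thesis using True rS
      by (simp only: d1 d1r d2 d2r a_def[symmetric] b_def[symmetric] indicator_simps if_True mult_1_right)
  qed
qed

lemma main_A_sup:
  fixes F :: "real \<Rightarrow> real \<Rightarrow> ennreal" and p f W1 W2 :: "'a::euclidean_space \<Rightarrow> real"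
  assumes sym: "\<forall>t\<in>S. refl_pt th t \<in> S"
    and p_nn: "\<forall>t\<in>S. 0 \<le> p t" and f_nn: "\<forall>t\<in>S. 0 \<le> f t"
    and f_sym: "\<forall>t\<in>S. f t = f (refl_pt th t)"
    and W1: "\<forall>t\<in>S. W1 t = sk (p t) (p (refl_pt th t))"
    and W2: "\<forall>t\<in>S. 0 \<le> W2 t \<and> W2 t \<le> 1 \<and> W2 t = 1 - W2 (refl_pt th t)"
    and sup: "\<And>x1 x2 y1 y2. 0 \<le> x1 \<Longrightarrow> 0 \<le> x2 \<Longrightarrow> 0 \<le> y1 \<Longrightarrow> 0 \<le> y2 \<Longrightarrow>
                F x1 y1 + F x2 y2 \<le> F (x1+x2) (y1+y2)"
    and hom: "\<And>a b c. 0 \<le> a \<Longrightarrow> 0 \<le> b \<Longrightarrow> 0 \<le> c \<Longrightarrow>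
                F a (c * sk a b) + F b (c * (1 - sk a b)) = F (a+b) c"
    and m1: "(\<lambda>t. F (p t) (skew_density f W1 t) * indicator S t) \<in> borel_measurable borel"
    and m2: "(\<lambda>t. F (p t) (skew_density f W2 t) * indicator S t) \<in> borel_measurable borel"
  shows "(\<integral>\<^sup>+t. F (p t) (skew_density f W2 t) * indicator S t \<partial>lborel)
           \<le> (\<integral>\<^sup>+t. F (p t) (skew_density f W1 t) * indicator S t \<partial>lborel)"
proof (rule nn_integral_pair_le[OF m2 m1])
  fix t
  show "F (p t) (skew_density f W2 t) * indicator S t + F (p (refl_pt th t)) (skew_density f W2 (refl_pt th t)) * indicator S (refl_pt th t)
     \<le> F (p t) (skew_density f W1 t) * indicator S t + F (p (refl_pt th t)) (skew_density f W1 (refl_pt th t)) * indicator S (refl_pt th t)"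
  proof (cases "t \<in> S")
    case False
    then show ?thesis using sym_ind[OF sym, of t] by simp
  next
    case True
    define a b c w where "a = p t" and "b = p (refl_pt th t)" and "c = 2 * f t" and "w = W2 t"
    have rS: "refl_pt th t \<in> S" using sym True by auto
    have abc: "0 \<le> a" "0 \<le> b" "0 \<le> c" using True rS p_nn f_nn by (auto simp: a_def b_def c_def)
    have w: "0 \<le> w" "w \<le> 1" using W2 True by (auto simp: w_def)
    have d1: "skew_density f W1 t = c * sk a b" using W1 True by (simp add: skew_density_def a_def b_def c_def)
    have fr: "f (refl_pt th t) = f t" using f_sym True by auto
    have d1r: "skew_density f W1 (refl_pt th t) = c * (1 - sk a b)"
    proof -
      have "W1 (refl_pt th t) = sk b a" using W1 rS by (simp add: a_def b_def)
      then show ?thesis using sk_swap[OF abc(1,2)] fr by (simp add: skew_density_def c_def)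
    qed
    have d2: "skew_density f W2 t = c * w" by (simp add: skew_density_def c_def w_def)
    have d2r: "skew_density f W2 (refl_pt th t) = c * (1 - w)"
    proof -
      have "W2 (refl_pt th t) = 1 - w" using W2 True by (simp add: w_def)
      then show ?thesis using fr by (simp add: skew_density_def c_def)
    qed
    have cw: "c*w + c*(1-w) = c" by (simp add: algebra_simps)
    have "F a (c*w) + F b (c*(1-w)) \<le> F (a+b) (c*w + c*(1-w))" using abc w by (intro sup) auto
    also have "\<dots> = F a (c * sk a b) + F b (c * (1 - sk a b))"
      using hom[OF abc] by (simp only: cw)
    finally show ?thesis using True rS
      by (simp only: d1 d1r d2 d2r a_def[symmetric] b_def[symmetric] indicator_simps if_True mult_1_right)
  qed
qed

lemma pow_e_meas[measurable]:
  assumes [measurable]: "h \<in> borel_measurable M"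
  shows "(\<lambda>t. pow_e (h t) a) \<in> borel_measurable M"
  unfolding pow_e_def by measurable

lemma kl_pos_meas[measurable]:
  assumes [measurable]: "h \<in> borel_measurable M" "g \<in> borel_measurable M"
  shows "(\<lambda>t. kl_pos (h t) (g t)) \<in> borel_measurable M"
  unfolding kl_pos_def by measurable

lemma kl_neg_meas[measurable]:
  assumes [measurable]: "h \<in> borel_measurable M" "g \<in> borel_measurable M"
  shows "(\<lambda>t. kl_neg (h t) (g t)) \<in> borel_measurable M"
  unfolding kl_neg_def by measurable

lemma phi_meas[measurable]:
  assumes [measurable]: "h \<in> borel_measurable M" "g \<in> borel_measurable M"
  shows "(\<lambda>t. phi (h t) (g t)) \<in> borel_measurable M"
  unfolding phi_def by measurable

lemma skew_meas[measurable]: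
  fixes prior lik :: "'a::euclidean_space \<Rightarrow> real"
  assumes [measurable]: "prior \<in> borel_measurable borel" "lik \<in> borel_measurable borel"
  shows "skew_factor prior lik th \<in> borel_measurable borel"
  unfolding skew_factor_def[abs_def] Let_def by measurable

lemma skd_meas[measurable]:
  assumes [measurable]: "f \<in> borel_measurable M" "w \<in> borel_measurable M"
  shows "skew_density f w \<in> borel_measurable M"
  unfolding skew_density_def[abs_def] by measurable

lemma post_meas[measurable]:
  assumes [measurable]: "prior \<in> borel_measurable M" "lik \<in> borel_measurable M"
  shows "posterior prior lik S \<in> borel_measurable M"
  unfolding posterior_def[abs_def] by measurable

lemma int_q_one:
  fixes f W :: "'a::euclidean_space \<Rightarrow> real"
  assumes [measurable]: "f \<in> borel_measurable borel" "W \<in> borel_measurable borel" "S \<in> sets borel"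
    and sym: "\<forall>t\<in>S. refl_pt th t \<in> S"
    and f_nn: "\<forall>t\<in>S. 0 \<le> f t" and f_sym: "\<forall>t\<in>S. f t = f (refl_pt th t)"
    and f_dens: "(\<integral>\<^sup>+ t. ennreal (f t) * indicator S t \<partial>lborel) = 1"
    and W: "\<forall>t\<in>S. 0 \<le> W t \<and> W t \<le> 1 \<and> W t = 1 - W (refl_pt th t)"
  shows "(\<integral>\<^sup>+ t. ennreal (skew_density f W t) * indicator S t \<partial>lborel) = 1"
proof -
  let ?Q = "\<lambda>t. ennreal (skew_density f W t) * indicator S t"
  have [measurable]: "?Q \<in> borel_measurable borel" by measurable
  have pw: "?Q t + ?Q (refl_pt th t) = 2 * (ennreal (f t) * indicator S t)" for t
  proof (cases "t \<in> S")
    case False then show ?thesis using sym_ind[OF sym, of t] by simp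
  next
    case True
    have rS: "refl_pt th t \<in> S" using sym True by auto
    have fr: "f (refl_pt th t) = f t" using f_sym True by auto
    have wr: "W (refl_pt th t) = 1 - W t" using W True by auto
    have "ennreal (2 * f t * W t) + ennreal (2 * f t * (1 - W t)) = ennreal (2 * f t * W t + 2 * f t * (1 - W t))"
      using W True f_nn by (intro ennreal_plus[symmetric]) auto
    also have "\<dots> = 2 * ennreal (f t)" using f_nn True by (simp add: algebra_simps ennreal_mult)
    finally show ?thesis using True rS by (simp add: skew_density_def fr wr)
  qed
  have "(\<integral>\<^sup>+t. ?Q t \<partial>lborel) + (\<integral>\<^sup>+t. ?Q t \<partial>lborel) = (\<integral>\<^sup>+t. ?Q t + ?Q (refl_pt th t) \<partial>lborel)"
    by (rule nn_integral_pair) measurable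
  also have "\<dots> = (\<integral>\<^sup>+t. 2 * (ennreal (f t) * indicator S t) \<partial>lborel)" by (simp only: pw)
  also have "\<dots> = 2 * (\<integral>\<^sup>+t. ennreal (f t) * indicator S t \<partial>lborel)" by (rule nn_integral_cmult) measurable
  also have "\<dots> = 2 * 1" by (simp only: f_dens)
  finally have "2 * (\<integral>\<^sup>+t. ?Q t \<partial>lborel) = 2 * 1" by (simp add: mult_2)
  then show ?thesis by (subst (asm) ennreal_mult_cancel_left) auto
qed

lemma sk_scale: fixes A B N :: real assumes "0 < N" "0 \<le> A" "0 \<le> B"
  shows "sk (A/N) (B/N) = (if A = 0 \<and> A + B = 0 then 1/2 else A/(A+B))"
proof (cases "A + B = 0")
  case True then have "A = 0" "B = 0" using assms by auto
  then show ?thesis by (simp add: sk_def)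
next
  case False
  then have "A/N + B/N \<noteq> 0" using assms by (simp add: add_divide_distrib[symmetric])
  then show ?thesis using False assms by (auto simp: sk_def add_divide_distrib[symmetric])
qed

lemma KL_conv:
  fixes u v :: "'a::euclidean_space \<Rightarrow> real"
  assumes [measurable]: "u \<in> borel_measurable borel" "v \<in> borel_measurable borel" "S \<in> sets borel"
    and nn: "\<forall>t\<in>S. 0 \<le> u t \<and> 0 \<le> v t"
    and iu: "(\<integral>\<^sup>+ t. ennreal (u t) * indicator S t \<partial>lborel) = 1"
    and iv: "(\<integral>\<^sup>+ t. ennreal (v t) * indicator S t \<partial>lborel) = 1"
  shows "KL_div S u v = enn2ereal (\<integral>\<^sup>+ t. phi (u t) (v t) * indicator S t \<partial>lborel)"
proof -
  define P where "P = (\<integral>\<^sup>+ t. kl_pos (u t) (v t) * indicator S t \<partial>lborel)"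
  define Ng where "Ng = (\<integral>\<^sup>+ t. kl_neg (u t) (v t) * indicator S t \<partial>lborel)"
  define Ph where "Ph = (\<integral>\<^sup>+ t. phi (u t) (v t) * indicator S t \<partial>lborel)"
  have pw: "kl_pos (u t) (v t) * indicator S t + ennreal (v t) * indicator S t
       = kl_neg (u t) (v t) * indicator S t + ennreal (u t) * indicator S t + phi (u t) (v t) * indicator S t" for t
    using kl_id[of "u t" "v t"] nn by (cases "t \<in> S") auto
  have "P + 1 = (\<integral>\<^sup>+ t. kl_pos (u t) (v t) * indicator S t + ennreal (v t) * indicator S t \<partial>lborel)"
    unfolding P_def iv[symmetric] by (subst nn_integral_add) auto
  also have "\<dots> = (\<integral>\<^sup>+ t. kl_neg (u t) (v t) * indicator S t + ennreal (u t) * indicator S t + phi (u t) (v t) * indicator S t \<partial>lborel)"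
    by (simp only: pw)
  also have "\<dots> = Ng + 1 + Ph"
    unfolding Ng_def Ph_def iu[symmetric] by (subst nn_integral_add; (subst nn_integral_add)?) auto
  finally have "P + 1 = (Ng + Ph) + 1" by (simp add: algebra_simps)
  then have PN: "P = Ng + Ph" by simp
  have "Ng \<le> (\<integral>\<^sup>+ t. ennreal (v t) * indicator S t \<partial>lborel)"
    unfolding Ng_def using nn kl_neg_le by (intro nn_integral_mono) (auto simp: indicator_def)
  then have "Ng \<noteq> \<infinity>" using iv by (auto simp: top_unique)
  then have "enn2ereal (Ng + Ph) - enn2ereal Ng = enn2ereal Ph"
    by (metis enn2ereal_eq_top_iff enn2ereal_nonneg ereal_add_cancel_left
    ereal_ineq_diff_add ereal_le_add_self infinity_ennreal_def
    not_MInfty_nonneg plus_ennreal.rep_eq)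
  then show ?thesis unfolding KL_div_def P_def[symmetric] Ng_def[symmetric] Ph_def[symmetric] PN .
qed

lemma ereal_pos_mono: "(c::real) > 0 \<Longrightarrow> (J::ennreal) \<le> I \<Longrightarrow> ereal c * (1 - enn2ereal I) \<le> ereal c * (1 - enn2ereal J)"
  by (simp add: ereal_minus_mono ereal_mult_left_mono less_eq_ennreal.rep_eq)

lemma ereal_neg_mono: "(c::real) < 0 \<Longrightarrow> (I::ennreal) \<le> J \<Longrightarrow> ereal c * (1 - enn2ereal I) \<le> ereal c * (1 - enn2ereal J)"
  using ereal_minus_mono ereal_mult_le_mult_iff less_eq_ennreal.rep_eq by auto

lemma TV_sub: fixes x1 x2 y1 y2 :: real shows "0 \<le> x1 \<Longrightarrow> 0 \<le> x2 \<Longrightarrow> 0 \<le> y1 \<Longrightarrow> 0 \<le> y2 \<Longrightarrow>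
   ennreal \<bar>x1 + x2 - (y1 + y2)\<bar> \<le> ennreal \<bar>x1 - y1\<bar> + ennreal \<bar>x2 - y2\<bar>"
proof -
  have "\<bar>x1 + x2 - (y1 + y2)\<bar> \<le> \<bar>x1 - y1\<bar> + \<bar>x2 - y2\<bar>" by arith
  then have "ennreal \<bar>x1 + x2 - (y1 + y2)\<bar> \<le> ennreal (\<bar>x1 - y1\<bar> + \<bar>x2 - y2\<bar>)" by (rule ennreal_leI)
  also have "\<dots> = ennreal \<bar>x1 - y1\<bar> + ennreal \<bar>x2 - y2\<bar>" by (rule ennreal_plus) auto
  finally show ?thesis .
qed

lemma TV_hom: fixes a b c :: real shows "0 \<le> a \<Longrightarrow> 0 \<le> b \<Longrightarrow> 0 \<le> c \<Longrightarrow>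
   ennreal \<bar>a - c * sk a b\<bar> + ennreal \<bar>b - c * (1 - sk a b)\<bar> = ennreal \<bar>a + b - c\<bar>"
  using TV_homA[of a b c] by (subst ennreal_plus[symmetric]) auto

lemma mid_sup: fixes x1 x2 y1 y2 \<alpha> :: real assumes "0 < \<alpha>" "\<alpha> < 1" shows "0 \<le> x1 \<Longrightarrow> 0 \<le> x2 \<Longrightarrow> 0 \<le> y1 \<Longrightarrow> 0 \<le> y2 \<Longrightarrow>
   pow_e x1 \<alpha> * pow_e y1 (1-\<alpha>) + pow_e x2 \<alpha> * pow_e y2 (1-\<alpha>) \<le> pow_e (x1+x2) \<alpha> * pow_e (y1+y2) (1-\<alpha>)"
  using assms Gr_sup[of x1 x2 y1 y2 \<alpha>]
  by (simp add: pe_mid ennreal_plus[symmetric] del: ennreal_plus)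

lemma mid_hom: fixes a b c \<alpha> :: real assumes "0 < \<alpha>" "\<alpha> < 1" shows "0 \<le> a \<Longrightarrow> 0 \<le> b \<Longrightarrow> 0 \<le> c \<Longrightarrow>
   pow_e a \<alpha> * pow_e (c * sk a b) (1-\<alpha>) + pow_e b \<alpha> * pow_e (c * (1 - sk a b)) (1-\<alpha>) = pow_e (a+b) \<alpha> * pow_e c (1-\<alpha>)"
proof -
  assume h: "0 \<le> a" "0 \<le> b" "0 \<le> c"
  have s: "0 \<le> c * sk a b" "0 \<le> c * (1 - sk a b)" using sk_nonneg[OF h(1,2)] h by auto
  show ?thesis using assms h s Gr_homA[of a b c \<alpha>]
    by (simp only: pe_mid add_nonneg_nonneg) (simp add: ennreal_plus[symmetric] del: ennreal_plus)
qed

lemma big_sub: fixes x1 x2 y1 y2 \<alpha> :: real assumes "1 < \<alpha>" shows "0 \<le> x1 \<Longrightarrow> 0 \<le> x2 \<Longrightarrow> 0 \<le> y1 \<Longrightarrow> 0 \<le> y2 \<Longrightarrow>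
   pow_e (x1+x2) \<alpha> * pow_e (y1+y2) (1-\<alpha>) \<le> pow_e x1 \<alpha> * pow_e y1 (1-\<alpha>) + pow_e x2 \<alpha> * pow_e y2 (1-\<alpha>)"
  using assms Hb_sub[of x1 x2 y1 y2 \<alpha>] by (simp add: pe_big)

lemma big_hom: fixes a b c \<alpha> :: real assumes "1 < \<alpha>" shows "0 \<le> a \<Longrightarrow> 0 \<le> b \<Longrightarrow> 0 \<le> c \<Longrightarrow>
   pow_e a \<alpha> * pow_e (c * sk a b) (1-\<alpha>) + pow_e b \<alpha> * pow_e (c * (1 - sk a b)) (1-\<alpha>) = pow_e (a+b) \<alpha> * pow_e c (1-\<alpha>)"
proof -
  assume h: "0 \<le> a" "0 \<le> b" "0 \<le> c"
  have s: "0 \<le> c * sk a b" "0 \<le> c * (1 - sk a b)" using sk_nonneg[OF h(1,2)] h by auto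
  show ?thesis using assms h s Hb_homA[of a b c \<alpha>] by (simp only: pe_big add_nonneg_nonneg)
qed

lemma neg_sub: fixes x1 x2 y1 y2 \<alpha> :: real assumes "\<alpha> < 0" shows "0 \<le> x1 \<Longrightarrow> 0 \<le> x2 \<Longrightarrow> 0 \<le> y1 \<Longrightarrow> 0 \<le> y2 \<Longrightarrow>
   pow_e (x1+x2) \<alpha> * pow_e (y1+y2) (1-\<alpha>) \<le> pow_e x1 \<alpha> * pow_e y1 (1-\<alpha>) + pow_e x2 \<alpha> * pow_e y2 (1-\<alpha>)"
  using assms Hb_sub[of y1 y2 x1 x2 "1-\<alpha>"] by (simp add: pe_neg)

lemma neg_hom: fixes a b c \<alpha> :: real assumes "\<alpha> < 0" shows "0 \<le> a \<Longrightarrow> 0 \<le> b \<Longrightarrow> 0 \<le> c \<Longrightarrow>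
   pow_e a \<alpha> * pow_e (c * sk a b) (1-\<alpha>) + pow_e b \<alpha> * pow_e (c * (1 - sk a b)) (1-\<alpha>) = pow_e (a+b) \<alpha> * pow_e c (1-\<alpha>)"
proof -
  assume h: "0 \<le> a" "0 \<le> b" "0 \<le> c"
  have s: "0 \<le> c * sk a b" "0 \<le> c * (1 - sk a b)" using sk_nonneg[OF h(1,2)] h by auto
  show ?thesis using assms h s Hb_homB[of a b c "1-\<alpha>"] by (simp only: pe_neg add_nonneg_nonneg)
qed

lemma phi_sub': fixes x1 x2 y1 y2 :: real shows "0 \<le> x1 \<Longrightarrow> 0 \<le> x2 \<Longrightarrow> 0 \<le> y1 \<Longrightarrow> 0 \<le> y2 \<Longrightarrow>
   phi (y1+y2) (x1+x2) \<le> phi y1 x1 + phi y2 x2"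
  by (rule phi_sub) auto

theorem theorem2:
  fixes \<Theta> :: "'a::euclidean_space set" and th :: 'a
    and prior lik f w :: "'a \<Rightarrow> real"
  assumes Theta_meas: "\<Theta> \<in> sets lborel"
    and th_in: "th \<in> \<Theta>"
    and Theta_sym: "sym_about th \<Theta>"
    and prior_meas: "prior \<in> borel_measurable lborel"
    and lik_meas: "lik \<in> borel_measurable lborel"
    and prior_nonneg: "\<forall>t\<in>\<Theta>. prior t \<ge> 0"
    and lik_nonneg: "\<forall>t\<in>\<Theta>. lik t \<ge> 0"
    and norm_pos: "(\<integral>\<^sup>+ t. ennreal (prior t * lik t) * indicator \<Theta> t \<partial>lborel) \<noteq> 0"
    and norm_fin: "(\<integral>\<^sup>+ t. ennreal (prior t * lik t) * indicator \<Theta> t \<partial>lborel) \<noteq> \<infinity>"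
    and f_meas: "f \<in> borel_measurable lborel"
    and f_nonneg: "\<forall>t\<in>\<Theta>. f t \<ge> 0"
    and f_dens: "(\<integral>\<^sup>+ t. ennreal (f t) * indicator \<Theta> t \<partial>lborel) = 1"
    and f_sym: "\<forall>t\<in>\<Theta>. f t = f (refl_pt th t)"
    and w_meas: "w \<in> borel_measurable lborel"
    and w_range: "\<forall>t\<in>\<Theta>. 0 \<le> w t \<and> w t \<le> 1"
    and w_anti: "\<forall>t\<in>\<Theta>. w t = 1 - w (refl_pt th t)"
  shows "TV_div \<Theta> (posterior prior lik \<Theta>) (skew_density f (skew_factor prior lik th))
           \<le> TV_div \<Theta> (posterior prior lik \<Theta>) (skew_density f w)
       \<and> (\<forall>\<alpha>::real. \<alpha> \<noteq> 0 \<and> \<alpha> \<noteq> 1 \<longrightarrow>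
            alpha_div \<alpha> \<Theta> (posterior prior lik \<Theta>) (skew_density f (skew_factor prior lik th))
              \<le> alpha_div \<alpha> \<Theta> (posterior prior lik \<Theta>) (skew_density f w))
       \<and> KL_div \<Theta> (posterior prior lik \<Theta>) (skew_density f (skew_factor prior lik th))
           \<le> KL_div \<Theta> (posterior prior lik \<Theta>) (skew_density f w)
       \<and> KL_div \<Theta> (skew_density f (skew_factor prior lik th)) (posterior prior lik \<Theta>)
           \<le> KL_div \<Theta> (skew_density f w) (posterior prior lik \<Theta>)"
proof -
  note [measurable] = refl_meas
  have [measurable]: "prior \<in> borel_measurable borel" "lik \<in> borel_measurable borel"
    "f \<in> borel_measurable borel" "w \<in> borel_measurable borel" "\<Theta> \<in> sets borel"
    using prior_meas lik_meas f_meas w_meas Theta_meas by auto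
  have sym: "\<forall>t\<in>\<Theta>. refl_pt th t \<in> \<Theta>" using Theta_sym by (simp add: sym_about_def)
  define I where "I = (\<integral>\<^sup>+ t. ennreal (prior t * lik t) * indicator \<Theta> t \<partial>lborel)"
  define N where "N = post_norm prior lik \<Theta>"
  have NI: "N = enn2real I" by (simp add: N_def I_def post_norm_def)
  have Npos: "0 < N" using norm_pos norm_fin unfolding NI I_def
    by (metis gr_implies_not_zero enn2real_positive_iff top.extremum_strict infinity_ennreal_def antisym_conv3)
  have IN: "I = ennreal N" using norm_fin unfolding NI I_def by (simp add: ennreal_enn2real_if)
  define p where "p = posterior prior lik \<Theta>"
  have pdef: "p t = prior t * lik t / N" for t by (simp add: p_def posterior_def N_def)
  have [measurable]: "p \<in> borel_measurable borel" unfolding p_def by measurable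
  have AB: "0 \<le> prior t * lik t" if "t \<in> \<Theta>" for t using prior_nonneg lik_nonneg that by auto
  have p_nn: "\<forall>t\<in>\<Theta>. 0 \<le> p t" using AB Npos by (simp add: pdef)
  define W1 where "W1 = skew_factor prior lik th"
  have [measurable]: "W1 \<in> borel_measurable borel" unfolding W1_def by measurable
  have W1eq: "\<forall>t\<in>\<Theta>. W1 t = sk (p t) (p (refl_pt th t))"
  proof
    fix t assume t: "t \<in> \<Theta>"
    then have "refl_pt th t \<in> \<Theta>" using sym by auto
    then show "W1 t = sk (p t) (p (refl_pt th t))"
      using sk_scale[OF Npos AB[OF t] AB[of "refl_pt th t"]]
      by (simp add: W1_def skew_factor_def Let_def pdef)
  qed
  have W1adm: "\<forall>t\<in>\<Theta>. 0 \<le> W1 t \<and> W1 t \<le> 1 \<and> W1 t = 1 - W1 (refl_pt th t)"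
  proof
    fix t assume t: "t \<in> \<Theta>"
    then have rt: "refl_pt th t \<in> \<Theta>" using sym by auto
    show "0 \<le> W1 t \<and> W1 t \<le> 1 \<and> W1 t = 1 - W1 (refl_pt th t)"
      using W1eq t rt p_nn sk_nonneg[of "p t" "p (refl_pt th t)"] sk_swap[of "p t" "p (refl_pt th t)"]
      by auto
  qed
  have wadm: "\<forall>t\<in>\<Theta>. 0 \<le> w t \<and> w t \<le> 1 \<and> w t = 1 - w (refl_pt th t)"
    using w_range w_anti by auto
  have ip: "(\<integral>\<^sup>+ t. ennreal (p t) * indicator \<Theta> t \<partial>lborel) = 1"
  proof -
    have "(\<integral>\<^sup>+ t. ennreal (p t) * indicator \<Theta> t \<partial>lborel)
        = (\<integral>\<^sup>+ t. ennreal (prior t * lik t) * indicator \<Theta> t * ennreal (1/N) \<partial>lborel)"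
    proof (intro nn_integral_cong)
      fix t show "ennreal (p t) * indicator \<Theta> t = ennreal (prior t * lik t) * indicator \<Theta> t * ennreal (1/N)"
        using AB[of t] Npos by (cases "t \<in> \<Theta>") (auto simp: pdef ennreal_mult[symmetric])
    qed
    also have "\<dots> = I * ennreal (1/N)" unfolding I_def by (rule nn_integral_multc) measurable
    also have "\<dots> = 1" using Npos by (simp add: IN ennreal_mult[symmetric])
    finally show ?thesis .
  qed
  have iq1: "(\<integral>\<^sup>+ t. ennreal (skew_density f W1 t) * indicator \<Theta> t \<partial>lborel) = 1"
    by (rule int_q_one[OF _ _ _ sym f_nonneg f_sym f_dens W1adm]) measurable
  have iq2: "(\<integral>\<^sup>+ t. ennreal (skew_density f w t) * indicator \<Theta> t \<partial>lborel) = 1"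
    by (rule int_q_one[OF _ _ _ sym f_nonneg f_sym f_dens wadm]) measurable
  have q1_nn: "\<forall>t\<in>\<Theta>. 0 \<le> skew_density f W1 t" using W1adm f_nonneg by (auto simp: skew_density_def)
  have q2_nn: "\<forall>t\<in>\<Theta>. 0 \<le> skew_density f w t" using wadm f_nonneg by (auto simp: skew_density_def)

  have TV: "TV_div \<Theta> p (skew_density f W1) \<le> TV_div \<Theta> p (skew_density f w)"
  proof -
    have "(\<integral>\<^sup>+ t. ennreal \<bar>p t - skew_density f W1 t\<bar> * indicator \<Theta> t \<partial>lborel)
        \<le> (\<integral>\<^sup>+ t. ennreal \<bar>p t - skew_density f w t\<bar> * indicator \<Theta> t \<partial>lborel)"
      by (rule main_A[where F="\<lambda>x y. ennreal \<bar>x - y\<bar>", OF sym p_nn f_nonneg f_sym W1eq wadm TV_sub TV_hom]) measurable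
    then show ?thesis unfolding TV_div_def by (rule mult_left_mono) simp
  qed

  have AL: "alpha_div \<alpha> \<Theta> p (skew_density f W1) \<le> alpha_div \<alpha> \<Theta> p (skew_density f w)"
    if a: "\<alpha> \<noteq> 0" "\<alpha> \<noteq> 1" for \<alpha>
  proof -
    consider "\<alpha> < 0" | "0 < \<alpha>" "\<alpha> < 1" | "1 < \<alpha>" using a by fastforce
    then show ?thesis
    proof cases
      case 1
      have c: "1 / (\<alpha> * (1 - \<alpha>)) < 0" using 1 by (simp add: divide_less_0_iff mult_neg_pos)
      show ?thesis unfolding alpha_div_def
        by (intro ereal_neg_mono[OF c] main_A[where F="\<lambda>x y. pow_e x \<alpha> * pow_e y (1-\<alpha>)",
              OF sym p_nn f_nonneg f_sym W1eq wadm neg_sub[OF 1] neg_hom[OF 1]]) measurable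
    next
      case 2
      have c: "0 < 1 / (\<alpha> * (1 - \<alpha>))" using 2 by simp
      show ?thesis unfolding alpha_div_def
        by (intro ereal_pos_mono[OF c] main_A_sup[where F="\<lambda>x y. pow_e x \<alpha> * pow_e y (1-\<alpha>)",
              OF sym p_nn f_nonneg f_sym W1eq wadm mid_sup[OF 2] mid_hom[OF 2]]) measurable
    next
      case 3
      have c: "1 / (\<alpha> * (1 - \<alpha>)) < 0" using 3 by (simp add: divide_less_0_iff mult_pos_neg)
      show ?thesis unfolding alpha_div_def
        by (intro ereal_neg_mono[OF c] main_A[where F="\<lambda>x y. pow_e x \<alpha> * pow_e y (1-\<alpha>)",
              OF sym p_nn f_nonneg f_sym W1eq wadm big_sub[OF 3] big_hom[OF 3]]) measurable
    qed
  qed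

  have KL1: "KL_div \<Theta> p (skew_density f W1) \<le> KL_div \<Theta> p (skew_density f w)"
  proof -
    have "KL_div \<Theta> p (skew_density f W1) = enn2ereal (\<integral>\<^sup>+ t. phi (p t) (skew_density f W1 t) * indicator \<Theta> t \<partial>lborel)"
      by (rule KL_conv[OF _ _ _ _ ip iq1]) (use p_nn q1_nn in auto)
    moreover have "KL_div \<Theta> p (skew_density f w) = enn2ereal (\<integral>\<^sup>+ t. phi (p t) (skew_density f w t) * indicator \<Theta> t \<partial>lborel)"
      by (rule KL_conv[OF _ _ _ _ ip iq2]) (use p_nn q2_nn in auto)
    moreover have "(\<integral>\<^sup>+ t. phi (p t) (skew_density f W1 t) * indicator \<Theta> t \<partial>lborel) \<le> (\<integral>\<^sup>+ t. phi (p t) (skew_density f w t) * indicator \<Theta> t \<partial>lborel)"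
      by (rule main_A[where F="phi", OF sym p_nn f_nonneg f_sym W1eq wadm phi_sub phi_homA]) measurable
    ultimately show ?thesis by (simp add: less_eq_ennreal.rep_eq)
  qed

  have KL2: "KL_div \<Theta> (skew_density f W1) p \<le> KL_div \<Theta> (skew_density f w) p"
  proof -
    have "KL_div \<Theta> (skew_density f W1) p = enn2ereal (\<integral>\<^sup>+ t. phi (skew_density f W1 t) (p t) * indicator \<Theta> t \<partial>lborel)"
      by (rule KL_conv[OF _ _ _ _ iq1 ip]) (use p_nn q1_nn in auto)
    moreover have "KL_div \<Theta> (skew_density f w) p = enn2ereal (\<integral>\<^sup>+ t. phi (skew_density f w t) (p t) * indicator \<Theta> t \<partial>lborel)"
      by (rule KL_conv[OF _ _ _ _ iq2 ip]) (use p_nn q2_nn in auto)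
    moreover have "(\<integral>\<^sup>+ t. phi (skew_density f W1 t) (p t) * indicator \<Theta> t \<partial>lborel) \<le> (\<integral>\<^sup>+ t. phi (skew_density f w t) (p t) * indicator \<Theta> t \<partial>lborel)"
      by (rule main_A[where F="\<lambda>x y. phi y x", OF sym p_nn f_nonneg f_sym W1eq wadm phi_sub' phi_homB]) measurable
    ultimately show ?thesis by (simp add: less_eq_ennreal.rep_eq)
  qed

  show ?thesis using TV AL KL1 KL2 by (simp add: p_def W1_def)
qed

end
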